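(* Let $n\ge k\ge 2$ and $r\ge 0$ be integers. Then for every real $\alpha>1$, \[ \mathsf{opt}_{\operatorname{bandit}}^{\operatorname{det}}(n,k,r)\le \frac{\alpha}{\alpha-1}\,k\ln\!\left(\frac{n\alpha^r}{k}\right)+k-1. \]
   Context: Prediction with expert advice: $\mathcal{Y}=\{1,\dots,k\}$, $\mathcal{X}=[k]^n$, experts $h_i(x)=x_i$, $i=1,\dots,n$. $\mathcal{P}_r$ is the set of finite sequences of examples in $\mathcal{X}\times\mathcal{Y}$ on which some $h_i$ errs on at most $r$ examples. Bandit feedback: each round the adversary presents $x_t$, a deterministic learner predicts $\hat y_t$ as a function of past observations and $x_t$, and learns only whether $\hat y_t$ equals the true label $y_t$. $\mathsf{opt}_{\operatorname{bandit}}^{\operatorname{det}}(n,k,r)$ is the infimum over deterministic learners of the supremum over $S\in\mathcal{P}_r$ of the number of mistakes ($\hat y_t\ne y_t$). *)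

theory Defs
  imports Complex_Main "HOL-Library.Extended_Real"
begin

(* Instances x in X = [k]^n are lists of length n with entries in {1..k};
   expert i (0-based, i < n) predicts x ! i.  Labels are in {1..k}. *)

definition instances :: "nat \<Rightarrow> nat \<Rightarrow> nat list set" where
  "instances n k = {x. length x = n \<and> set x \<subseteq> {1..k}}"

type_synonym example = "nat list \<times> nat"

(* observation of a past round: instance, own prediction, whether it was correct *)
type_synonym obs = "nat list \<times> nat \<times> bool"

type_synonym learner = "obs list \<Rightarrow> nat list \<Rightarrow> nat"

definition learners :: "nat \<Rightarrow> learner set" where
  "learners k = {L. \<forall>h x. L h x \<in> {1..k}}"

fun mistakes :: "learner \<Rightarrow> obs list \<Rightarrow> example list \<Rightarrow> nat" where
  "mistakes L h [] = 0"
| "mistakes L h ((x, y) # S) =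
     (let p = L h x in (if p = y then 0 else 1) + mistakes L (h @ [(x, p, p = y)]) S)"

definition expert_errors :: "nat \<Rightarrow> example list \<Rightarrow> nat" where
  "expert_errors i S = card {t. t < length S \<and> fst (S ! t) ! i \<noteq> snd (S ! t)}"

definition realizable_seqs :: "nat \<Rightarrow> nat \<Rightarrow> nat \<Rightarrow> example list set" where
  "realizable_seqs n k r =
     {S. (\<forall>(x, y) \<in> set S. x \<in> instances n k \<and> y \<in> {1..k})
         \<and> (\<exists>i<n. expert_errors i S \<le> r)}"

definition opt_bandit_det :: "nat \<Rightarrow> nat \<Rightarrow> nat \<Rightarrow> ereal" where
  "opt_bandit_det n k r =
     (INF L \<in> learners k. SUP S \<in> realizable_seqs n k r. ereal (real (mistakes L [] S)))"

end

theory Submission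
  imports Defs
begin
lemma key:
  fixes a m m' d z z' :: real
  assumes a: "a > 1" and m1: "m' \<ge> 1" and mm: "m' \<le> m" and md: "m - m' \<le> d"
    and zm: "z \<ge> m" and z'p: "z' > 0" and z'le: "z' \<le> z - (1 - 1/a) * z / m - d / a"
  shows "a/(a-1) * m' * ln (z'/m') + m' + 1 \<le> a/(a-1) * m * ln (z/m) + m"
proof -
  define u where "u = z / m"
  define c where "c = (a - 1) / a"
  have m0: "m > 0" using m1 mm by linarith
  have u1: "u \<ge> 1" using zm m0 by (simp add: u_def)
  have c0: "c > 0" using a by (simp add: c_def)
  have c1: "1 - c = 1/a" using a by (simp add: c_def field_simps)
  have ac: "a/(a-1) = 1/c" using a by (simp add: c_def)
  have h1: "ln (z'/m') \<le> ln u + z'/(m' * u) - 1"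
  proof -
    have "ln ((z'/m')/u) \<le> (z'/m')/u - 1" using z'p m1 u1 by (intro ln_le_minus_one) simp
    moreover have "ln ((z'/m')/u) = ln (z'/m') - ln u" using z'p m1 u1 by (simp add: ln_div ln_mult)
    ultimately show ?thesis by simp
  qed
  have h2: "ln u \<ge> 1 - 1/u"
  proof -
    have "ln (1/u) \<le> 1/u - 1" using u1 by (intro ln_le_minus_one) simp
    moreover have "ln (1/u) = - ln u" using u1 by (simp add: ln_div)
    ultimately show ?thesis by simp
  qed
  have h3: "z'/u \<le> m - c - d/(a*u)"
  proof -
    have "z'/u \<le> (z - (1 - 1/a) * z / m - d / a)/u" using z'le u1 by (simp add: divide_right_mono)
    also have "\<dots> = m - c - d/(a*u)" using m0 u1 a unfolding u_def c_def
      by (simp add: field_simps)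
    finally show ?thesis .
  qed
  have h4: "m' * ln (z'/m') \<le> m' * ln u + z'/u - m'"
  proof -
    have "m' * ln (z'/m') \<le> m' * (ln u + z'/(m' * u) - 1)" using h1 m1 by simp
    also have "\<dots> = m' * ln u + z'/u - m'" using m1 by (simp add: field_simps)
    finally show ?thesis .
  qed
  define j where "j = m - m'"
  have j0: "j \<ge> 0" using mm by (simp add: j_def)
  have h5: "j/a - d/(a*u) \<le> j * ln u"
  proof -
    have "d/(a*u) \<ge> j/(a*u)" using md a u1 by (simp add: j_def divide_right_mono)
    hence "j/a - d/(a*u) \<le> (j/a) * (1 - 1/u)" using a u1 by (simp add: field_simps)
    also have "\<dots> \<le> j * (1 - 1/u)"
    proof (intro mult_right_mono)
      show "j/a \<le> j" using j0 a mult_right_mono[of 1 a j] by (simp add: divide_le_eq mult.commute)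
      show "0 \<le> 1 - 1/u" using u1 by simp
    qed
    also have "\<dots> \<le> j * ln u" using j0 h2 by (simp add: mult_left_mono)
    finally show ?thesis .
  qed
  have main: "m' * ln (z'/m') + c * m' + c \<le> m * ln u + c * m"
  proof -
    have "m' * ln (z'/m') + c * m' + c \<le> m' * ln u + (m - c - d/(a*u)) - m' + c * m' + c"
      using h4 h3 by linarith
    also have "\<dots> = m' * ln u + (1 - c) * j - d/(a*u) + c * m" by (simp add: j_def algebra_simps)
    also have "\<dots> = m' * ln u + j/a - d/(a*u) + c * m" using c1 by simp
    also have "\<dots> \<le> m' * ln u + j * ln u + c * m" using h5 by linarith
    also have "\<dots> = m * ln u + c * m" by (simp add: j_def algebra_simps)
    finally show ?thesis .
  qed
  have "a/(a-1) * m' * ln (z'/m') + m' + 1 = (m' * ln (z'/m') + c * m' + c) / c"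
    unfolding ac using c0 by (simp add: field_simps)
  also have "\<dots> \<le> (m * ln u + c * m) / c" using main c0 by (simp add: divide_right_mono)
  also have "\<dots> = a/(a-1) * m * ln (z/m) + m" unfolding ac using c0 by (simp add: field_simps u_def)
  finally show ?thesis .
qed

definition errs :: "obs list \<Rightarrow> nat \<Rightarrow> nat" where
  "errs h i = length (filter (\<lambda>(x, p, b). \<not> b \<and> x ! i = p) h)"

definition alive :: "nat \<Rightarrow> nat \<Rightarrow> obs list \<Rightarrow> nat set" where
  "alive n r h = {i. i < n \<and> errs h i \<le> r}"

definition wt :: "real \<Rightarrow> nat \<Rightarrow> obs list \<Rightarrow> nat \<Rightarrow> real" where
  "wt a r h i = a ^ (r - errs h i)"

definition gw :: "real \<Rightarrow> nat \<Rightarrow> nat \<Rightarrow> obs list \<Rightarrow> nat list \<Rightarrow> nat \<Rightarrow> real" where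
  "gw a n r h x p = (\<Sum>i\<in>{i\<in>alive n r h. x ! i = p}. wt a r h i)"

definition lrn :: "real \<Rightarrow> nat \<Rightarrow> nat \<Rightarrow> nat \<Rightarrow> learner" where
  "lrn a n k r = (\<lambda>h x. SOME p. p \<in> {1..k} \<and> (\<forall>q\<in>{1..k}. gw a n r h x q \<le> gw a n r h x p))"

definition zz :: "real \<Rightarrow> nat \<Rightarrow> nat \<Rightarrow> obs list \<Rightarrow> real" where
  "zz a n r h = (\<Sum>i\<in>alive n r h. wt a r h i)"

definition pot :: "real \<Rightarrow> nat \<Rightarrow> nat \<Rightarrow> nat \<Rightarrow> obs list \<Rightarrow> real" where
  "pot a n k r h = (let m = real (min k (card (alive n r h)))
     in a / (a - 1) * m * ln (zz a n r h / m) + m - 1)"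

lemma errs_False: "errs (h @ [(x, p, False)]) i = errs h i + (if x ! i = p then 1 else 0)"
  by (simp add: errs_def)

lemma errs_True: "errs (h @ [(x, p, True)]) i = errs h i"
  by (simp add: errs_def)

lemma lrn_spec:
  assumes "k \<ge> 1"
  shows "lrn a n k r h x \<in> {1..k} \<and> (\<forall>q\<in>{1..k}. gw a n r h x q \<le> gw a n r h x (lrn a n k r h x))"
proof -
  let ?f = "gw a n r h x"
  let ?M = "Max (?f ` {1..k})"
  have "?M \<in> ?f ` {1..k}" using assms by (intro Max_in) auto
  then obtain p where p: "p \<in> {1..k}" "?f p = ?M" by auto
  have "\<forall>q\<in>{1..k}. ?f q \<le> ?f p" using p by (auto intro: Max_ge)
  with p have "\<exists>p. p \<in> {1..k} \<and> (\<forall>q\<in>{1..k}. ?f q \<le> ?f p)" by blast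
  then show ?thesis unfolding lrn_def by (rule someI_ex)
qed

lemma wt_ge1: "a > 1 \<Longrightarrow> wt a r h i \<ge> 1"
  by (simp add: wt_def)

lemma zz_ge: "a > 1 \<Longrightarrow> zz a n r h \<ge> card (alive n r h)"
proof -
  assume a: "a > 1"
  have "real (card (alive n r h)) = (\<Sum>i\<in>alive n r h. 1)" by simp
  also have "\<dots> \<le> zz a n r h" unfolding zz_def using wt_ge1[OF a] by (intro sum_mono) auto
  finally show ?thesis .
qed

lemma finite_alive: "finite (alive n r h)" by (simp add: alive_def)

lemma pot_nonneg:
  assumes a: "a > 1" and ne: "alive n r h \<noteq> {}" and k: "k \<ge> 1"
  shows "pot a n k r h \<ge> 0"
proof -
  define m where "m = real (min k (card (alive n r h)))"
  have c: "card (alive n r h) \<ge> 1" using ne finite_alive by (simp add: Suc_le_eq card_gt_0_iff)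
  have m1: "m \<ge> 1" using c k by (simp add: m_def)
  have "zz a n r h \<ge> m" using zz_ge[OF a, of n r h] by (simp add: m_def)
  hence "zz a n r h / m \<ge> 1" using m1 by simp
  hence "ln (zz a n r h / m) \<ge> 0" by simp
  moreover have "a / (a - 1) * m \<ge> 0" using a m1 by simp
  ultimately have "a / (a - 1) * m * ln (zz a n r h / m) \<ge> 0" by (rule mult_nonneg_nonneg[rotated])
  then show ?thesis unfolding pot_def Let_def m_def[symmetric] using m1 by linarith
qed


lemma pot_step:
  assumes a: "a > 1" and k: "k \<ge> 1" and x: "length x = n" and lab: "set x \<subseteq> {1..k}"
    and p: "p = lrn a n k r h x"
    and ne: "alive n r (h @ [(x, p, False)]) \<noteq> {}"
  shows "pot a n k r (h @ [(x, p, False)]) + 1 \<le> pot a n k r h"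
proof -
  define h' where "h' = h @ [(x, p, False)]"
  define Al where "Al = alive n r h"
  define G where "G = {i\<in>Al. x ! i = p}"
  define Dd where "Dd = {i\<in>G. errs h i = r}"
  define W where "W = gw a n r h x p"
  define z where "z = zz a n r h"
  define z' where "z' = zz a n r h'"
  define d where "d = card Dd"
  define A where "A = card Al"
  have finAl: "finite Al" by (simp add: Al_def finite_alive)
  have GAl: "G \<subseteq> Al" and DG: "Dd \<subseteq> G" by (auto simp: G_def Dd_def)
  have finG: "finite G" using finAl GAl finite_subset by blast
  have finD: "finite Dd" using finG DG finite_subset by blast
  have alive': "alive n r h' = Al - Dd"
    by (auto simp: alive_def h'_def errs_False Al_def Dd_def G_def split: if_splits)
  have W_def': "W = (\<Sum>i\<in>G. wt a r h i)" by (simp add: W_def gw_def G_def Al_def)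
  have wt_out: "wt a r h' i = wt a r h i" if "i \<in> Al - G" for i
    using that by (simp add: wt_def h'_def errs_False G_def)
  have wt_in: "wt a r h' i = wt a r h i / a" if "i \<in> G - Dd" for i
  proof -
    have e: "errs h i < r" using that by (auto simp: G_def Dd_def Al_def alive_def)
    have xi: "x ! i = p" using that by (simp add: G_def)
    have "r - errs h i = Suc (r - (errs h i + 1))" using e by simp
    hence "wt a r h i = a * a ^ (r - (errs h i + 1))" by (simp add: wt_def)
    moreover have "wt a r h' i = a ^ (r - (errs h i + 1))" by (simp add: wt_def h'_def errs_False xi)
    ultimately show ?thesis using a by simp
  qed
  have wt_D: "wt a r h i = 1" if "i \<in> Dd" for i using that by (simp add: wt_def Dd_def)
  have split: "Al - Dd = (Al - G) \<union> (G - Dd)" using GAl DG by auto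
  have z'_eq: "z' = (z - W) + (W - d) / a"
  proof -
    have "z' = (\<Sum>i\<in>Al - G. wt a r h' i) + (\<Sum>i\<in>G - Dd. wt a r h' i)"
      unfolding z'_def zz_def alive' split using finAl finG by (intro sum.union_disjoint) auto
    also have "(\<Sum>i\<in>Al - G. wt a r h' i) = (\<Sum>i\<in>Al - G. wt a r h i)" using wt_out by simp
    also have "\<dots> = z - W" unfolding z_def zz_def W_def' Al_def[symmetric]
      using finAl GAl by (simp add: sum_diff)
    also have "(\<Sum>i\<in>G - Dd. wt a r h' i) = (\<Sum>i\<in>G - Dd. wt a r h i) / a"
      using wt_in by (simp add: sum_divide_distrib)
    also have "(\<Sum>i\<in>G - Dd. wt a r h i) = W - (\<Sum>i\<in>Dd. wt a r h i)"
      unfolding W_def' using finG DG by (simp add: sum_diff)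
    also have "(\<Sum>i\<in>Dd. wt a r h i) = d" using wt_D by (simp add: d_def)
    finally show ?thesis .
  qed
  have pmax: "\<forall>q\<in>{1..k}. gw a n r h x q \<le> W" using lrn_spec[OF k, of a n r h x] p by (simp add: W_def)
  have W0: "W \<ge> 0" unfolding W_def gw_def using a by (intro sum_nonneg) (simp add: wt_def)
  define labs where "labs = (\<lambda>i. x ! i) ` Al"
  have labs_sub: "labs \<subseteq> {1..k}"
  proof
    fix q assume "q \<in> labs"
    then obtain i where i: "i \<in> Al" "q = x ! i" by (auto simp: labs_def)
    have "i < n" using i by (simp add: Al_def alive_def)
    hence "x ! i \<in> set x" using x by simp
    thus "q \<in> {1..k}" using lab i by auto
  qed
  have card_labs: "card labs \<le> min k A"
  proof -
    have "card labs \<le> card {1..k}" using labs_sub by (intro card_mono) auto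
    moreover have "card labs \<le> A" unfolding labs_def A_def using finAl by (rule card_image_le)
    ultimately show ?thesis by simp
  qed
  have z_le: "z \<le> real (min k A) * W"
  proof -
    have "z = (\<Sum>q\<in>labs. \<Sum>i\<in>{i\<in>Al. x ! i = q}. wt a r h i)"
      unfolding z_def zz_def labs_def Al_def[symmetric] using finAl by (rule sum.image_gen)
    also have "\<dots> = (\<Sum>q\<in>labs. gw a n r h x q)" by (simp add: gw_def Al_def)
    also have "\<dots> \<le> (\<Sum>q\<in>labs. W)" using pmax labs_sub by (intro sum_mono) auto
    also have "\<dots> = real (card labs) * W" by simp
    also have "\<dots> \<le> real (min k A) * W" using card_labs W0 by (intro mult_right_mono) auto
    finally show ?thesis .
  qed
  have cardA': "card (alive n r h') = A - d"
    unfolding alive' A_def d_def using finD DG GAl by (simp add: card_Diff_subset)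
  have A'1: "A - d \<ge> 1" using ne cardA' finite_alive[of n r h']
    by (metis h'_def One_nat_def Suc_leI card_gt_0_iff)
  have dA: "d \<le> A" unfolding d_def A_def using DG GAl finAl by (intro card_mono) auto
  define m where "m = real (min k A)"
  define m' where "m' = real (min k (A - d))"
  have m'1: "m' \<ge> 1" using A'1 k by (simp add: m'_def)
  have mm: "m' \<le> m" by (simp add: m'_def m_def)
  have md: "m - m' \<le> real d"
  proof -
    have "min k A \<le> min k (A - d) + d" using dA by simp
    hence "real (min k A) \<le> real (min k (A - d)) + real d" by linarith
    thus ?thesis by (simp add: m_def m'_def)
  qed
  have zm: "z \<ge> m" using zz_ge[OF a, of n r h] by (simp add: m_def z_def A_def Al_def)
  have z'p: "z' > 0" using zz_ge[OF a, of n r h'] cardA' A'1 by (simp add: z'_def)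
  have m0: "m > 0" using m'1 mm by linarith
  have Wz: "z / m \<le> W" using z_le m0 by (simp add: m_def divide_le_eq mult.commute)
  have z'le: "z' \<le> z - (1 - 1/a) * z / m - real d / a"
  proof -
    have ca: "0 \<le> 1 - 1/a" using a by simp
    have "z' = z - (1 - 1/a) * W - real d / a" using a unfolding z'_eq by (simp add: field_simps)
    also have "\<dots> \<le> z - (1 - 1/a) * (z / m) - real d / a"
      using mult_left_mono[OF Wz ca] by linarith
    finally show ?thesis by simp
  qed
  have "a/(a-1) * m' * ln (z'/m') + m' + 1 \<le> a/(a-1) * m * ln (z/m) + m"
    by (rule key[OF a m'1 mm md zm z'p z'le])
  moreover have "pot a n k r h' = a/(a-1) * m' * ln (z'/m') + m' - 1"
    by (simp add: pot_def Let_def cardA' m'_def z'_def)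
  moreover have "pot a n k r h = a/(a-1) * m * ln (z/m) + m - 1"
    by (simp add: pot_def Let_def m_def z_def A_def Al_def)
  ultimately show ?thesis by (simp add: h'_def)
qed


lemma main:
  assumes a: "a > 1" and k: "k \<ge> 1" and i0: "i0 < n"
    and valid: "\<forall>(x, y)\<in>set S. x \<in> instances n k \<and> y \<in> {1..k}"
    and bud: "errs h i0 + length (filter (\<lambda>(x, y). x ! i0 \<noteq> y) S) \<le> r"
  shows "real (mistakes (lrn a n k r) h S) \<le> pot a n k r h"
  using valid bud
proof (induction S arbitrary: h)
  case Nil
  have "i0 \<in> alive n r h" using Nil.prems i0 by (simp add: alive_def)
  hence "alive n r h \<noteq> {}" by blast
  thus ?case using pot_nonneg[OF a _ k] by simp
next
  case (Cons e S)
  obtain x y where e: "e = (x, y)" by fastforce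
  define p where "p = lrn a n k r h x"
  have xv: "x \<in> instances n k" and valS: "\<forall>(x, y)\<in>set S. x \<in> instances n k \<and> y \<in> {1..k}"
    using Cons.prems(1) e by auto
  have xl: "length x = n" and xs: "set x \<subseteq> {1..k}" using xv by (auto simp: instances_def)
  show ?case
  proof (cases "p = y")
    case True
    define h' where "h' = h @ [(x, p, True)]"
    have E: "errs h' = errs h" by (rule ext) (simp add: h'_def errs_True)
    have "errs h' i0 + length (filter (\<lambda>(x, y). x ! i0 \<noteq> y) S) \<le> r"
      using Cons.prems(2) E e by (auto split: if_splits)
    hence IH: "real (mistakes (lrn a n k r) h' S) \<le> pot a n k r h'" using Cons.IH valS by blast
    have "pot a n k r h' = pot a n k r h" by (simp add: pot_def zz_def alive_def wt_def E)
    moreover have "mistakes (lrn a n k r) h (e # S) = mistakes (lrn a n k r) h' S"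
      using True by (simp add: e h'_def p_def[symmetric] Let_def)
    ultimately show ?thesis using IH by simp
  next
    case False
    define h' where "h' = h @ [(x, p, False)]"
    have eh': "errs h' i0 = errs h i0 + (if x ! i0 = p then 1 else 0)" by (simp add: h'_def errs_False)
    have b2: "errs h' i0 + length (filter (\<lambda>(x, y). x ! i0 \<noteq> y) S) \<le> r"
      using Cons.prems(2) False e eh' by (auto split: if_splits)
    hence IH: "real (mistakes (lrn a n k r) h' S) \<le> pot a n k r h'" using Cons.IH valS by blast
    have "i0 \<in> alive n r h'" using b2 i0 by (simp add: alive_def)
    hence ne: "alive n r (h @ [(x, p, False)]) \<noteq> {}" unfolding h'_def by blast
    have step: "pot a n k r h' + 1 \<le> pot a n k r h"
      unfolding h'_def by (rule pot_step[OF a k xl xs p_def ne])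
    have "mistakes (lrn a n k r) h (e # S) = 1 + mistakes (lrn a n k r) h' S"
      using False by (simp add: e h'_def p_def[symmetric] Let_def)
    thus ?thesis using IH step by simp
  qed
qed

lemma expert_errors_filter: "expert_errors i S = length (filter (\<lambda>(x, y). x ! i \<noteq> y) S)"
  unfolding expert_errors_def length_filter_conv_card by (simp add: case_prod_beta)

lemma pot_init:
  assumes "k \<le> n"
  shows "pot a n k r [] = a / (a - 1) * real k * ln (real n * a ^ r / real k) + real k - 1"
proof -
  have al: "alive n r [] = {..<n}" by (auto simp: alive_def errs_def)
  have "zz a n r [] = real n * a ^ r" by (simp add: zz_def al wt_def errs_def)
  thus ?thesis using assms by (simp add: pot_def Let_def al min_def)
qed

theorem lemma4p2:
  fixes n k r :: nat and \<alpha> :: real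
  assumes "2 \<le> k" and "k \<le> n" and "1 < \<alpha>"
  shows "opt_bandit_det n k r \<le>
    ereal (\<alpha> / (\<alpha> - 1) * real k * ln (real n * \<alpha> ^ r / real k) + real k - 1)"
proof -
  have k: "k \<ge> 1" using assms by simp
  define L where "L = lrn \<alpha> n k r"
  have Lin: "L \<in> learners k" using lrn_spec[OF k] by (simp add: learners_def L_def)
  have "(SUP S \<in> realizable_seqs n k r. ereal (real (mistakes L [] S))) \<le>
    ereal (\<alpha> / (\<alpha> - 1) * real k * ln (real n * \<alpha> ^ r / real k) + real k - 1)"
  proof (rule SUP_least)
    fix S assume "S \<in> realizable_seqs n k r"
    then obtain i0 where i0: "i0 < n" "expert_errors i0 S \<le> r"
      and valid: "\<forall>(x, y)\<in>set S. x \<in> instances n k \<and> y \<in> {1..k}"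
      by (auto simp: realizable_seqs_def)
    have "errs [] i0 + length (filter (\<lambda>(x, y). x ! i0 \<noteq> y) S) \<le> r"
      using i0 by (simp add: errs_def expert_errors_filter)
    from main[OF assms(3) k i0(1) valid this]
    have "real (mistakes L [] S) \<le> pot \<alpha> n k r []" by (simp add: L_def)
    thus "ereal (real (mistakes L [] S)) \<le>
      ereal (\<alpha> / (\<alpha> - 1) * real k * ln (real n * \<alpha> ^ r / real k) + real k - 1)"
      using pot_init[OF assms(2)] by simp
  qed
  moreover have "opt_bandit_det n k r \<le> (SUP S \<in> realizable_seqs n k r. ereal (real (mistakes L [] S)))"
    unfolding opt_bandit_det_def using Lin by (rule INF_lower)
  ultimately show ?thesis by (rule order_trans[rotated])
qed

end
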